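(* Let $R$ be a localizable partially ordered commutative ring. Then the extended Gelfand transformation $\widehat{\cdot}\colon R\to\mathscr{C}_\approx(\mathcal{D}_{\mathrm{loc}}(R))$ is a positive ring morphism.
   Context: Rings are commutative with unit; ring morphisms are unital. A partially ordered commutative ring is a commutative ring $R$ with partial order $\le$, $r\le s\Rightarrow r+t\le s+t$, positive cone $R^+$ closed under multiplication and containing all squares. $\mathbb{N}_0=\{0,1,2,\dots\}$. $\mathrm{Loc}(R)$ is the set of $s\in1+R^+$ such that $rs\in R^+$ implies $r\in R^+$ for all $r\in R$; $R$ is localizable if every $r$ satisfies $-s\le r\le s$ for some $s\in\mathrm{Loc}(R)$. A ring morphism is positive if it maps positive elements to positive elements. Admissible domains on a space $Y$: a set $\mathcal{D}$ of open subsets with $Y\in\mathcal{D}$, closed under pairwise intersections. $\mathscr{C}_\approx(\mathcal{D})$: functions in $\bigcup_{A\in\mathcal{D}}\mathscr{C}(A)$ with pointwise operations on $\operatorname{dom}f\cap\operatorname{dom}g$, modulo $f\approx g$ iff $f|_A=g|_A$ for some $A\in\mathcal{D}$, $A\subseteq\operatorname{dom}f\cap\operatorname{dom}g$; ordered by $[f]\le[g]$ iff $f|_A\le g|_A$ for some such $A$. $R_{\mathrm{loc}}$: fractions $r/s$ ($r\in R$, $s\in\mathrm{Loc}(R)$), $r/s=r'/s'$ iff $rs'=r's$, usual operations, $p/q\le r/s$ iff $ps\le rq$. $R^{\mathrm{bd}}_{\mathrm{loc}}=\{a:\exists n\in\mathbb{N}_0,\ -n\le a\le n\}$. $\mathcal{K}(R)$: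 ring morphisms $\varphi\colon R^{\mathrm{bd}}_{\mathrm{loc}}\to\mathbb{R}$ with $\varphi(a)\ge0$ for $a\ge0$, weak-$*$ topology. $\mathrm{O}_{s<\infty}=\{\varphi:\varphi(1/s)>0\}$, $\mathcal{D}_{\mathrm{loc}}(R)=\{\mathrm{O}_{s<\infty}:s\in\mathrm{Loc}(R)\}$ (admissible). The extended Gelfand transformation sends $r\in R$ to the class $\widehat r$ of $r_s\colon\mathrm{O}_{s<\infty}\to\mathbb{R}$, $\varphi\mapsto\varphi(1/s)^{-1}\varphi(r/s)$, for any $s\in\mathrm{Loc}(R)$ with $r/s\in R^{\mathrm{bd}}_{\mathrm{loc}}$ (independent of $s$). *)

theory Defs
  imports "HOL-Analysis.Analysis"
begin

definition pocr :: "('a::comm_ring_1 \<Rightarrow> 'a \<Rightarrow> bool) \<Rightarrow> bool" where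
  "pocr le \<longleftrightarrow>
     (\<forall>x. le x x) \<and> (\<forall>x y. le x y \<longrightarrow> le y x \<longrightarrow> x = y) \<and>
     (\<forall>x y z. le x y \<longrightarrow> le y z \<longrightarrow> le x z) \<and>
     (\<forall>r s t. le r s \<longrightarrow> le (r + t) (s + t)) \<and>
     (\<forall>x y. le 0 x \<longrightarrow> le 0 y \<longrightarrow> le 0 (x * y)) \<and>
     (\<forall>x. le 0 (x * x))"

definition Loc :: "('a::comm_ring_1 \<Rightarrow> 'a \<Rightarrow> bool) \<Rightarrow> 'a set" where
  "Loc le = {s. (\<exists>p. le 0 p \<and> s = 1 + p) \<and> (\<forall>r. le 0 (r * s) \<longrightarrow> le 0 r)}"

definition localizable :: "('a::comm_ring_1 \<Rightarrow> 'a \<Rightarrow> bool) \<Rightarrow> bool" where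
  "localizable le \<longleftrightarrow> (\<forall>r. \<exists>s\<in>Loc le. le (- s) r \<and> le r s)"

text \<open>A pair (r,s) stands for the fraction r/s; (r,s) and (r',s') represent the
  same element iff r s' = r' s.\<close>

definition frac_eq :: "'a::comm_ring_1 \<times> 'a \<Rightarrow> 'a \<times> 'a \<Rightarrow> bool" where
  "frac_eq p q \<longleftrightarrow> fst p * snd q = fst q * snd p"

definition frac_add :: "'a::comm_ring_1 \<times> 'a \<Rightarrow> 'a \<times> 'a \<Rightarrow> 'a \<times> 'a" where
  "frac_add p q = (fst p * snd q + fst q * snd p, snd p * snd q)"

definition frac_mult :: "'a::comm_ring_1 \<times> 'a \<Rightarrow> 'a \<times> 'a \<Rightarrow> 'a \<times> 'a" where
  "frac_mult p q = (fst p * fst q, snd p * snd q)"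

text \<open>(r,s) represents an element of the bounded part: -n \<le> r/s \<le> n, i.e.
  (-n)/1 \<le> r/s and r/s \<le> n/1, i.e. (-n) s \<le> r and r \<le> n s.\<close>

definition loc_bd :: "('a::comm_ring_1 \<Rightarrow> 'a \<Rightarrow> bool) \<Rightarrow> 'a \<times> 'a \<Rightarrow> bool" where
  "loc_bd le p \<longleftrightarrow> snd p \<in> Loc le \<and>
     (\<exists>n::nat. le ((- of_nat n) * snd p) (fst p * 1) \<and> le (fst p * 1) (of_nat n * snd p))"

text \<open>Positive ring morphisms from the bounded part to the reals, represented as
  real functions on representing pairs which respect the equivalence and vanish
  outside the representatives of bounded elements.  Positivity: 0/1 \<le> r/s iff
  0 s \<le> r 1.\<close>

definition character :: "('a::comm_ring_1 \<Rightarrow> 'a \<Rightarrow> bool) \<Rightarrow> ('a \<times> 'a \<Rightarrow> real) \<Rightarrow> bool" where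
  "character le \<phi> \<longleftrightarrow>
     (\<forall>p. \<not> loc_bd le p \<longrightarrow> \<phi> p = 0) \<and>
     (\<forall>p q. loc_bd le p \<longrightarrow> loc_bd le q \<longrightarrow> frac_eq p q \<longrightarrow> \<phi> p = \<phi> q) \<and>
     \<phi> (1, 1) = 1 \<and>
     (\<forall>p q. loc_bd le p \<longrightarrow> loc_bd le q \<longrightarrow> \<phi> (frac_add p q) = \<phi> p + \<phi> q) \<and>
     (\<forall>p q. loc_bd le p \<longrightarrow> loc_bd le q \<longrightarrow> \<phi> (frac_mult p q) = \<phi> p * \<phi> q) \<and>
     (\<forall>p. loc_bd le p \<longrightarrow> le (0 * snd p) (fst p * 1) \<longrightarrow> \<phi> p \<ge> 0)"

text \<open>The space K(R); its weak-* topology is the subspace topology of the product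
  topology on functions (pairs \<Rightarrow> real).\<close>

definition Kspace :: "('a::comm_ring_1 \<Rightarrow> 'a \<Rightarrow> bool) \<Rightarrow> ('a \<times> 'a \<Rightarrow> real) set" where
  "Kspace le = {\<phi>. character le \<phi>}"

definition Ktop :: "('a::comm_ring_1 \<Rightarrow> 'a \<Rightarrow> bool) \<Rightarrow> ('a \<times> 'a \<Rightarrow> real) topology" where
  "Ktop le = subtopology euclidean (Kspace le)"

definition Ofin :: "('a::comm_ring_1 \<Rightarrow> 'a \<Rightarrow> bool) \<Rightarrow> 'a \<Rightarrow> ('a \<times> 'a \<Rightarrow> real) set" where
  "Ofin le s = {\<phi> \<in> Kspace le. \<phi> (1, s) > 0}"

definition Dloc :: "('a::comm_ring_1 \<Rightarrow> 'a \<Rightarrow> bool) \<Rightarrow> ('a \<times> 'a \<Rightarrow> real) set set" where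
  "Dloc le = Ofin le ` Loc le"

section \<open>The ring C_approx(D), represented by pairs (domain, function)\<close>

definition cf_mem :: "'b topology \<Rightarrow> 'b set set \<Rightarrow> 'b set \<times> ('b \<Rightarrow> real) \<Rightarrow> bool" where
  "cf_mem T D F \<longleftrightarrow> fst F \<in> D \<and> continuous_map (subtopology T (fst F)) euclideanreal (snd F)"

definition cf_eq :: "'b set set \<Rightarrow> 'b set \<times> ('b \<Rightarrow> real) \<Rightarrow> 'b set \<times> ('b \<Rightarrow> real) \<Rightarrow> bool" where
  "cf_eq D F G \<longleftrightarrow> (\<exists>A\<in>D. A \<subseteq> fst F \<inter> fst G \<and> (\<forall>x\<in>A. snd F x = snd G x))"

definition cf_le :: "'b set set \<Rightarrow> 'b set \<times> ('b \<Rightarrow> real) \<Rightarrow> 'b set \<times> ('b \<Rightarrow> real) \<Rightarrow> bool" where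
  "cf_le D F G \<longleftrightarrow> (\<exists>A\<in>D. A \<subseteq> fst F \<inter> fst G \<and> (\<forall>x\<in>A. snd F x \<le> snd G x))"

definition cf_add :: "'b set \<times> ('b \<Rightarrow> real) \<Rightarrow> 'b set \<times> ('b \<Rightarrow> real) \<Rightarrow> 'b set \<times> ('b \<Rightarrow> real)" where
  "cf_add F G = (fst F \<inter> fst G, \<lambda>x. snd F x + snd G x)"

definition cf_mult :: "'b set \<times> ('b \<Rightarrow> real) \<Rightarrow> 'b set \<times> ('b \<Rightarrow> real) \<Rightarrow> 'b set \<times> ('b \<Rightarrow> real)" where
  "cf_mult F G = (fst F \<inter> fst G, \<lambda>x. snd F x * snd G x)"

definition cf_const :: "'b set \<Rightarrow> real \<Rightarrow> 'b set \<times> ('b \<Rightarrow> real)" where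
  "cf_const Y c = (Y, \<lambda>_. c)"

definition r_s :: "'a::comm_ring_1 \<Rightarrow> 'a \<Rightarrow> ('a \<times> 'a \<Rightarrow> real) \<Rightarrow> real" where
  "r_s r s = (\<lambda>\<phi>. inverse (\<phi> (1, s)) * \<phi> (r, s))"

text \<open>A representative of the class of r: any admissible s may be used
  (the class is independent of the choice).\<close>

definition gelfand :: "('a::comm_ring_1 \<Rightarrow> 'a \<Rightarrow> bool) \<Rightarrow> 'a \<Rightarrow> ('a \<times> 'a \<Rightarrow> real) set \<times> (('a \<times> 'a \<Rightarrow> real) \<Rightarrow> real)" where
  "gelfand le r = (let s = (SOME s. s \<in> Loc le \<and> loc_bd le (r, s)) in (Ofin le s, r_s r s))"

end

theory Submission
  imports Defs
begin

context
  fixes le :: "'a::comm_ring_1 \<Rightarrow> 'a \<Rightarrow> bool"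
  assumes po: "pocr le"
begin

lemma le_iff: "le x y \<longleftrightarrow> le 0 (y - x)"
proof
  assume "le x y"
  then have "le (x + - x) (y + - x)" using po unfolding pocr_def by blast
  then show "le 0 (y - x)" by simp
next
  assume "le 0 (y - x)"
  then have "le (0 + x) (y - x + x)" using po unfolding pocr_def by blast
  then show "le x y" by simp
qed

lemma P_add: "le 0 x \<Longrightarrow> le 0 y \<Longrightarrow> le 0 (x + y)"
  by (metis le_iff add_diff_cancel_right' diff_0_right po pocr_def)

lemma P_mult: "le 0 x \<Longrightarrow> le 0 y \<Longrightarrow> le 0 (x * y)"
  using po unfolding pocr_def by blast

lemma P_0: "le 0 0"
  using po unfolding pocr_def by blast

lemma P_1: "le 0 1"
  using po unfolding pocr_def by (metis mult_1)

lemma P_nat: "le 0 (of_nat n)"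
  by (induction n) (auto intro: P_add P_1 P_0 simp: add.commute)

lemma P_eq: "le 0 x \<Longrightarrow> x = y \<Longrightarrow> le 0 y" by simp

lemma Loc_P: "s \<in> Loc le \<Longrightarrow> le 0 (s - 1)"
  unfolding Loc_def by auto

lemma Loc_pos: "s \<in> Loc le \<Longrightarrow> le 0 s"
  using Loc_P[of s] P_add[OF _ P_1, of "s - 1"] by simp

lemma Loc_canc: "s \<in> Loc le \<Longrightarrow> le 0 (r * s) \<Longrightarrow> le 0 r"
  unfolding Loc_def by auto

lemma Loc_1: "1 \<in> Loc le"
  unfolding Loc_def using P_0 by auto

lemma Loc_mult: assumes "s \<in> Loc le" "t \<in> Loc le" shows "s * t \<in> Loc le"
proof -
  have "le 0 ((s - 1) + (t - 1) + (s - 1) * (t - 1))"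
    using assms by (intro P_add P_mult Loc_P)
  then have a: "\<exists>p. le 0 p \<and> s * t = 1 + p"
    by (intro exI[of _ "(s - 1) + (t - 1) + (s - 1) * (t - 1)"]) (simp add: algebra_simps)
  have "le 0 r" if "le 0 (r * (s * t))" for r
    using that assms Loc_canc by (metis mult.assoc)
  with a show ?thesis unfolding Loc_def by auto
qed

lemma bd_iff: "loc_bd le (r, s) \<longleftrightarrow> s \<in> Loc le \<and>
   (\<exists>n::nat. le 0 (of_nat n * s + r) \<and> le 0 (of_nat n * s - r))"
proof -
  have e: "\<And>n. le (- (of_nat n * s)) r \<longleftrightarrow> le 0 (of_nat n * s + r)"
    by (subst le_iff) (simp add: add.commute)
  show ?thesis unfolding loc_bd_def by (simp add: e le_iff[of r])
qed

lemma bd_ext: assumes "loc_bd le (r, s)" "u \<in> Loc le" shows "loc_bd le (r, s * u)"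
proof -
  obtain n where s: "s \<in> Loc le" and n: "le 0 (of_nat n * s + r)" "le 0 (of_nat n * s - r)"
    using assms(1) bd_iff by blast
  have q: "le 0 (of_nat n * s * (u - 1))"
    using assms s by (intro P_mult P_nat Loc_pos Loc_P)
  have "le 0 (of_nat n * s * (u - 1) + (of_nat n * s + r))" by (rule P_add[OF q n(1)])
  moreover have "le 0 (of_nat n * s * (u - 1) + (of_nat n * s - r))" by (rule P_add[OF q n(2)])
  ultimately show ?thesis using Loc_mult[OF s assms(2)] unfolding bd_iff
    by (intro conjI exI[of _ n]) (auto simp: algebra_simps)
qed

lemma bd_one: assumes "s \<in> Loc le" shows "loc_bd le (1, s)"
proof -
  have "le 0 (s - 1)" "le 0 (s + 1)" using assms Loc_P Loc_pos P_add P_1 by auto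
  then show ?thesis using assms unfolding bd_iff by (intro conjI exI[of _ 1]) auto
qed

lemma bd_self: assumes "s \<in> Loc le" shows "loc_bd le (s, s)"
proof -
  have "le 0 (2 * s)" using P_add[OF Loc_pos[OF assms] Loc_pos[OF assms]] by (metis mult_2)
  then show ?thesis using assms P_0 unfolding bd_iff by (intro conjI exI[of _ 1]) auto
qed

lemma bd_mult: assumes "loc_bd le (r, s)" "loc_bd le (r', s')" shows "loc_bd le (r * r', s * s')"
proof -
  obtain n where s: "s \<in> Loc le" and n: "le 0 (of_nat n * s + r)" "le 0 (of_nat n * s - r)"
    using assms(1) bd_iff by blast
  obtain m where s': "s' \<in> Loc le" and m: "le 0 (of_nat m * s' + r')" "le 0 (of_nat m * s' - r')"
    using assms(2) bd_iff by blast
  have ns: "le 0 (of_nat n * s)" using s by (intro P_mult P_nat Loc_pos)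
  have ms: "le 0 (of_nat m * s')" using s' by (intro P_mult P_nat Loc_pos)
  have a1: "le 0 ((of_nat n * s - r) * (of_nat m * s' + r'))" by (rule P_mult[OF n(2) m(1)])
  have a2: "le 0 ((of_nat n * s) * (of_nat m * s' - r'))" by (rule P_mult[OF ns m(2)])
  have a3: "le 0 ((of_nat m * s') * (of_nat n * s + r))" by (rule P_mult[OF ms n(1)])
  have b1: "le 0 ((of_nat n * s - r) * (of_nat m * s' - r'))" by (rule P_mult[OF n(2) m(2)])
  have b2: "le 0 ((of_nat n * s) * (of_nat m * s' + r'))" by (rule P_mult[OF ns m(1)])
  have b3: "le 0 ((of_nat m * s') * (of_nat n * s + r))" by (rule P_mult[OF ms n(1)])
  have A: "le 0 (of_nat (3*n*m) * (s * s') - r * r')"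
    using P_add[OF P_add[OF a1 a2] a3] by (simp add: algebra_simps)
  have B: "le 0 (of_nat (3*n*m) * (s * s') + r * r')"
    using P_add[OF P_add[OF b1 b2] b3] by (simp add: algebra_simps)
  show ?thesis using A B Loc_mult[OF s s'] unfolding bd_iff by blast
qed

lemma bd_exists: assumes "localizable le" shows "\<exists>s. s \<in> Loc le \<and> loc_bd le (r, s)"
proof -
  obtain s where s: "s \<in> Loc le" "le (- s) r" "le r s"
    using assms unfolding localizable_def by blast
  have "le 0 (s + r)" using s(2) by (subst (asm) le_iff) (simp add: add.commute)
  moreover have "le 0 (s - r)" using s(3) by (subst (asm) le_iff)
  ultimately show ?thesis using s(1) unfolding bd_iff by (intro exI[of _ s] conjI exI[of _ 1]) auto
qed

context
  fixes \<phi> assumes ch: "character le \<phi>"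
begin

lemma ch_resp: "loc_bd le p \<Longrightarrow> loc_bd le q \<Longrightarrow> frac_eq p q \<Longrightarrow> \<phi> p = \<phi> q"
  using ch unfolding character_def by blast
lemma ch_add: "loc_bd le p \<Longrightarrow> loc_bd le q \<Longrightarrow> \<phi> (frac_add p q) = \<phi> p + \<phi> q"
  using ch unfolding character_def by blast
lemma ch_mult: "loc_bd le p \<Longrightarrow> loc_bd le q \<Longrightarrow> \<phi> (frac_mult p q) = \<phi> p * \<phi> q"
  using ch unfolding character_def by blast
lemma ch_11: "\<phi> (1, 1) = 1"
  using ch unfolding character_def by blast
lemma ch_pos: "loc_bd le p \<Longrightarrow> le (0 * snd p) (fst p * 1) \<Longrightarrow> \<phi> p \<ge> 0"
  using ch unfolding character_def by blast

lemma ch_self: "s \<in> Loc le \<Longrightarrow> \<phi> (s, s) = 1"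
  using ch_resp[OF bd_self bd_one[OF Loc_1], of s] ch_11 by (simp add: frac_eq_def)

lemma ch_one_pos: "s \<in> Loc le \<Longrightarrow> \<phi> (1, s) \<ge> 0"
  using ch_pos[OF bd_one, of s] P_1 by simp

lemma ch_key: "loc_bd le (x, s) \<Longrightarrow> loc_bd le (x, t) \<Longrightarrow>
   \<phi> (x, s) * \<phi> (1, t) = \<phi> (x, t) * \<phi> (1, s)"
  using ch_mult[of "(x, s)" "(1, t)"] ch_mult[of "(x, t)" "(1, s)"] bd_one bd_iff
  by (simp add: frac_mult_def mult.commute)

lemma ch_one_split: "s \<in> Loc le \<Longrightarrow> u \<in> Loc le \<Longrightarrow> \<phi> (1, s * u) = \<phi> (1, s) * \<phi> (1, u)"
  using ch_mult[OF bd_one bd_one, of s u] by (simp add: frac_mult_def)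

lemma ch_one_sub: "s \<in> Loc le \<Longrightarrow> u \<in> Loc le \<Longrightarrow> \<phi> (1, s * u) > 0 \<Longrightarrow> \<phi> (1, s) > 0"
  using ch_one_split ch_one_pos
  by (metis less_eq_real_def mult_zero_left)

lemma ch_rs: "loc_bd le (x, s) \<Longrightarrow> loc_bd le (x, t) \<Longrightarrow> \<phi> (1, s) > 0 \<Longrightarrow> \<phi> (1, t) > 0 \<Longrightarrow>
   r_s x s \<phi> = r_s x t \<phi>"
  using ch_key[of x s t] unfolding r_s_def by (simp add: field_simps)

lemma ch_add_same: assumes "loc_bd le (x, t)" "loc_bd le (y, t)" "loc_bd le (x + y, t)"
  shows "\<phi> (x + y, t) = \<phi> (x, t) + \<phi> (y, t)"
proof -
  have t: "t \<in> Loc le" using assms(1) bd_iff by blast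
  have "\<phi> (x, t) + \<phi> (y, t) = \<phi> (frac_add (x, t) (y, t))" using ch_add assms by simp
  also have "frac_add (x, t) (y, t) = frac_mult (x + y, t) (t, t)"
    by (simp add: frac_add_def frac_mult_def algebra_simps)
  also have "\<phi> \<dots> = \<phi> (x + y, t)" using ch_mult[OF assms(3) bd_self[OF t]] ch_self[OF t] by simp
  finally show ?thesis by simp
qed

lemma ch_mult_rs: assumes "loc_bd le (x, s)" "loc_bd le (y, t)"
  shows "r_s (x * y) (s * t) \<phi> = r_s x s \<phi> * r_s y t \<phi>"
proof -
  have s: "s \<in> Loc le" and t: "t \<in> Loc le" using assms bd_iff by blast+
  have "\<phi> (x * y, s * t) = \<phi> (x, s) * \<phi> (y, t)"
    using ch_mult[OF assms] by (simp add: frac_mult_def)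
  then show ?thesis unfolding r_s_def using ch_one_split[OF s t] by simp
qed

end
end

theorem proposition26:
  fixes le :: "'a::comm_ring_1 \<Rightarrow> 'a \<Rightarrow> bool"
  assumes "pocr le" and "localizable le"
  shows "(\<forall>r. cf_mem (Ktop le) (Dloc le) (gelfand le r)) \<and>
         (\<forall>r r'. cf_eq (Dloc le) (gelfand le (r + r')) (cf_add (gelfand le r) (gelfand le r'))) \<and>
         (\<forall>r r'. cf_eq (Dloc le) (gelfand le (r * r')) (cf_mult (gelfand le r) (gelfand le r'))) \<and>
         cf_eq (Dloc le) (gelfand le 1) (cf_const (Kspace le) 1) \<and>
         (\<forall>r. le 0 r \<longrightarrow> cf_le (Dloc le) (cf_const (Kspace le) 0) (gelfand le r))"
proof -
  note po = assms(1)
  define S where "S r = (SOME s. s \<in> Loc le \<and> loc_bd le (r, s))" for r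
  have S: "S r \<in> Loc le \<and> loc_bd le (r, S r)" for r
    unfolding S_def using someI_ex[OF bd_exists[OF po assms(2)]] .
  have SL: "S r \<in> Loc le" for r using S by blast
  have SB: "loc_bd le (r, S r)" for r using S by blast
  have g: "gelfand le r = (Ofin le (S r), r_s r (S r))" for r
    unfolding gelfand_def S_def Let_def by (rule refl)
  have OfinD: "character le \<phi>" "\<phi> (1, s) > 0" if "\<phi> \<in> Ofin le s" for \<phi> s
    using that unfolding Ofin_def Kspace_def by auto
  have OfinK: "Ofin le s \<subseteq> Kspace le" for s unfolding Ofin_def by auto
  have Osub1: "Ofin le (s * u) \<subseteq> Ofin le s" if "s \<in> Loc le" "u \<in> Loc le" for s u
  proof
    fix \<phi> assume a: "\<phi> \<in> Ofin le (s * u)"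
    have ch: "character le \<phi>" and gt: "\<phi> (1, s * u) > 0" using OfinD[OF a] by blast+
    have "\<phi> (1, s) > 0" by (rule ch_one_sub[OF po ch that gt])
    then show "\<phi> \<in> Ofin le s" using ch unfolding Ofin_def Kspace_def by blast
  qed
  have Osub2: "Ofin le (s * u) \<subseteq> Ofin le u" if "s \<in> Loc le" "u \<in> Loc le" for s u
    using Osub1[OF that(2,1)] by (simp add: mult.commute)
  have D: "Ofin le s \<in> Dloc le" if "s \<in> Loc le" for s
    using that unfolding Dloc_def by blast
  have LM: "s * u \<in> Loc le" if "s \<in> Loc le" "u \<in> Loc le" for s u
    using Loc_mult[OF po that] .
  have coord: "continuous_on T (\<lambda>\<phi>::'a \<times> 'a \<Rightarrow> real. \<phi> i)" for T i
    by (rule continuous_on_subset[OF continuous_on_product_coordinates]) (rule subset_UNIV)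
  have P1: "\<forall>r. cf_mem (Ktop le) (Dloc le) (gelfand le r)"
  proof
    fix r
    let ?s = "S r"
    have "continuous_on (Kspace le \<inter> Ofin le ?s) (r_s r ?s)"
      unfolding r_s_def
      by (intro continuous_intros coord) (auto dest: OfinD)
    then show "cf_mem (Ktop le) (Dloc le) (gelfand le r)"
      unfolding cf_mem_def g Ktop_def using D[OF SL]
      by (simp add: subtopology_subtopology)
  qed
  have P2: "\<forall>r r'. cf_eq (Dloc le) (gelfand le (r + r')) (cf_add (gelfand le r) (gelfand le r'))"
  proof (intro allI)
    fix r r'
    let ?s1 = "S r" and ?s2 = "S r'" and ?s3 = "S (r + r')"
    let ?t = "?s1 * ?s2 * ?s3"
    have tL: "?t \<in> Loc le" using LM SL by blast
    have sub1: "Ofin le ?t \<subseteq> Ofin le ?s1" using Osub1[of ?s1 "?s2 * ?s3"] SL LM by (simp add: mult.assoc)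
    have sub2: "Ofin le ?t \<subseteq> Ofin le ?s2" using Osub1[of ?s2 "?s1 * ?s3"] SL LM by (simp add: ac_simps)
    have sub3: "Ofin le ?t \<subseteq> Ofin le ?s3" using Osub2[of "?s1 * ?s2" ?s3] SL LM by simp
    have b1: "loc_bd le (r, ?t)" using bd_ext[OF po SB[of r], of "?s2 * ?s3"] SL LM by (simp add: mult.assoc)
    have b2: "loc_bd le (r', ?t)" using bd_ext[OF po SB[of r'], of "?s1 * ?s3"] SL LM by (simp add: ac_simps)
    have b3: "loc_bd le (r + r', ?t)" using bd_ext[OF po SB[of "r + r'"], of "?s1 * ?s2"] SL LM by (simp add: ac_simps)
    have "r_s (r + r') ?s3 \<phi> = r_s r ?s1 \<phi> + r_s r' ?s2 \<phi>" if "\<phi> \<in> Ofin le ?t" for \<phi>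
    proof -
      have ch: "character le \<phi>" using OfinD that by blast
      have p: "\<phi> (1, ?t) > 0" "\<phi> (1, ?s1) > 0" "\<phi> (1, ?s2) > 0" "\<phi> (1, ?s3) > 0"
        using that sub1 sub2 sub3 OfinD by blast+
      have "r_s r ?s1 \<phi> = r_s r ?t \<phi>" by (rule ch_rs[OF po ch SB b1 p(2) p(1)])
      moreover have "r_s r' ?s2 \<phi> = r_s r' ?t \<phi>" by (rule ch_rs[OF po ch SB b2 p(3) p(1)])
      moreover have "r_s (r + r') ?s3 \<phi> = r_s (r + r') ?t \<phi>" by (rule ch_rs[OF po ch SB b3 p(4) p(1)])
      moreover have "\<phi> (r + r', ?t) = \<phi> (r, ?t) + \<phi> (r', ?t)" by (rule ch_add_same[OF po ch b1 b2 b3])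
      ultimately show ?thesis unfolding r_s_def by (simp add: algebra_simps)
    qed
    then show "cf_eq (Dloc le) (gelfand le (r + r')) (cf_add (gelfand le r) (gelfand le r'))"
      unfolding cf_eq_def cf_add_def g using D[OF tL] sub1 sub2 sub3
      by (intro bexI[of _ "Ofin le ?t"]) auto
  qed
  have P3: "\<forall>r r'. cf_eq (Dloc le) (gelfand le (r * r')) (cf_mult (gelfand le r) (gelfand le r'))"
  proof (intro allI)
    fix r r'
    let ?s1 = "S r" and ?s2 = "S r'" and ?s3 = "S (r * r')"
    let ?t = "?s1 * ?s2 * ?s3"
    have tL: "?t \<in> Loc le" using LM SL by blast
    have sub1: "Ofin le ?t \<subseteq> Ofin le ?s1" using Osub1[of ?s1 "?s2 * ?s3"] SL LM by (simp add: mult.assoc)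
    have sub2: "Ofin le ?t \<subseteq> Ofin le ?s2" using Osub1[of ?s2 "?s1 * ?s3"] SL LM by (simp add: ac_simps)
    have sub3: "Ofin le ?t \<subseteq> Ofin le ?s3" using Osub2[of "?s1 * ?s2" ?s3] SL LM by simp
    have sub12: "Ofin le ?t \<subseteq> Ofin le (?s1 * ?s2)" using Osub1[of "?s1 * ?s2" ?s3] SL LM by simp
    have b12: "loc_bd le (r * r', ?s1 * ?s2)" by (rule bd_mult[OF po SB SB])
    have "r_s (r * r') ?s3 \<phi> = r_s r ?s1 \<phi> * r_s r' ?s2 \<phi>" if "\<phi> \<in> Ofin le ?t" for \<phi>
    proof -
      have ch: "character le \<phi>" using OfinD that by blast
      have p: "\<phi> (1, ?s1 * ?s2) > 0" "\<phi> (1, ?s3) > 0"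
        using that sub12 sub3 OfinD by blast+
      have "r_s (r * r') ?s3 \<phi> = r_s (r * r') (?s1 * ?s2) \<phi>" by (rule ch_rs[OF po ch SB b12 p(2) p(1)])
      also have "\<dots> = r_s r ?s1 \<phi> * r_s r' ?s2 \<phi>" by (rule ch_mult_rs[OF po ch SB SB])
      finally show ?thesis .
    qed
    then show "cf_eq (Dloc le) (gelfand le (r * r')) (cf_mult (gelfand le r) (gelfand le r'))"
      unfolding cf_eq_def cf_mult_def g using D[OF tL] sub1 sub2 sub3
      by (intro bexI[of _ "Ofin le ?t"]) auto
  qed
  have P4: "cf_eq (Dloc le) (gelfand le 1) (cf_const (Kspace le) 1)"
  proof -
    have "r_s 1 (S 1) \<phi> = 1" if "\<phi> \<in> Ofin le (S 1)" for \<phi>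
      using OfinD(2)[OF that] unfolding r_s_def by simp
    then show ?thesis
      unfolding cf_eq_def cf_const_def g using D[OF SL[of 1]] OfinK[of "S 1"]
      by (intro bexI[of _ "Ofin le (S 1)"]) auto
  qed
  have P5: "\<forall>r. le 0 r \<longrightarrow> cf_le (Dloc le) (cf_const (Kspace le) 0) (gelfand le r)"
  proof (intro allI impI)
    fix r assume r: "le 0 r"
    have "0 \<le> r_s r (S r) \<phi>" if "\<phi> \<in> Ofin le (S r)" for \<phi>
    proof -
      have ch: "character le \<phi>" and p: "\<phi> (1, S r) > 0" using OfinD that by blast+
      have "\<phi> (r, S r) \<ge> 0" using ch_pos[OF po ch SB[of r]] r by simp
      then show ?thesis using p unfolding r_s_def by simp
    qed
    then show "cf_le (Dloc le) (cf_const (Kspace le) 0) (gelfand le r)"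
      unfolding cf_le_def cf_const_def g using D[OF SL[of r]] OfinK[of "S r"]
      by (intro bexI[of _ "Ofin le (S r)"]) auto
  qed
  show ?thesis using P1 P2 P3 P4 P5 by blast
qed

end
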